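(* For the binary tree-shifts $X_{15}=(C,D)$ and $X_{17}=(C,F)$, the limit $h_{PS}$ exists, $h_{PS}(X_{15})=h_{PS}(X_{17})$, and $$\tfrac14\log2\le h_{PS}(X_{15})\le\tfrac18\log7.$$
   Context: Binary tree-shifts: $k=2$, directions $a_1,a_2$, alphabet $\{0,1\}$; $(P,Q)$ is the set of trees $t:\{a_1,a_2\}^*\to\{0,1\}$ with $P_{t_x,t_{xa_1}}=1$, $Q_{t_x,t_{xa_2}}=1$ for all nodes $x$. Matrices: $C=\begin{pmatrix}0&1\\1&0\end{pmatrix}$, $D=\begin{pmatrix}1&1\\1&0\end{pmatrix}$, $F=\begin{pmatrix}0&1\\1&1\end{pmatrix}$. $p(n)$ is the number of allowed blocks of length $n$ (labellings $t|_{\Delta_n}$, $\Delta_n$ the words of length $\le n$), and $h_{PS}=\lim_{n\to\infty}\frac{\log p(n)}{1+2+\cdots+2^n}$. *)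

theory Defs
  imports Complex_Main "HOL-Library.FuncSet"
begin

datatype dir = A1 | A2

type_synonym tmat = "nat \<Rightarrow> nat \<Rightarrow> nat"

definition matC :: tmat where
  "matC i j = (if (i,j) \<in> {(0,1),(1,0)} then 1 else 0)"
definition matD :: tmat where
  "matD i j = (if (i,j) \<in> {(0,0),(0,1),(1,0)} then 1 else 0)"
definition matF :: tmat where
  "matF i j = (if (i,j) \<in> {(0,1),(1,0),(1,1)} then 1 else 0)"

definition tree_shift :: "tmat \<Rightarrow> tmat \<Rightarrow> (dir list \<Rightarrow> nat) set" where
  "tree_shift P Q = {t. (\<forall>x. t x \<in> {0,1}) \<and>
      (\<forall>x. P (t x) (t (x @ [A1])) = 1 \<and> Q (t x) (t (x @ [A2])) = 1)}"

definition Delta :: "nat \<Rightarrow> dir list set" where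
  "Delta n = {x. length x \<le> n}"

definition pcount :: "tmat \<Rightarrow> tmat \<Rightarrow> nat \<Rightarrow> nat" where
  "pcount P Q n = card ((\<lambda>t. restrict t (Delta n)) ` tree_shift P Q)"

definition hseq :: "tmat \<Rightarrow> tmat \<Rightarrow> nat \<Rightarrow> real" where
  "hseq P Q n = ln (real (pcount P Q n)) / real (\<Sum>i\<le>n. (2::nat) ^ i)"

end

theory Submission
  imports Defs
begin


definition W :: "tmat \<Rightarrow> tmat \<Rightarrow> nat \<Rightarrow> (dir list \<Rightarrow> nat) set" where
 "W P Q n = {f. f \<in> extensional (Delta n) \<and> (\<forall>x\<in>Delta n. f x \<le> 1) \<and>
    (\<forall>x. length x < n \<longrightarrow> P (f x) (f (x@[A1])) = 1 \<and> Q (f x) (f (x@[A2])) = 1)}"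

definition V :: "tmat \<Rightarrow> tmat \<Rightarrow> nat \<Rightarrow> nat \<Rightarrow> (dir list \<Rightarrow> nat) set" where
 "V P Q n r = {f \<in> W P Q n. f [] = r}"

definition build :: "nat \<Rightarrow> (dir list \<Rightarrow> nat) \<Rightarrow> (dir list \<Rightarrow> nat) \<Rightarrow> dir list \<Rightarrow> nat" where
 "build r g1 g2 x = (case x of [] \<Rightarrow> r | d#y \<Rightarrow> (case d of A1 \<Rightarrow> g1 y | A2 \<Rightarrow> g2 y))"

lemma build_simps[simp]: "build r g1 g2 [] = r" "build r g1 g2 (A1#y) = g1 y" "build r g1 g2 (A2#y) = g2 y"
  by (simp_all add: build_def)

lemma dl_cases: obtains "x = []" | y where "x = A1#y" | y where "x = A2#y"
  by (metis dir.exhaust list.exhaust)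

lemma V_Suc:
  assumes "r \<le> 1"
  shows "V P Q (Suc n) r = (\<lambda>(g1,g2). build r g1 g2) `
     ({g\<in>W P Q n. P r (g []) = 1} \<times> {g\<in>W P Q n. Q r (g []) = 1})"
proof
  show "(\<lambda>(g1,g2). build r g1 g2) ` ({g\<in>W P Q n. P r (g []) = 1} \<times> {g\<in>W P Q n. Q r (g []) = 1})
      \<subseteq> V P Q (Suc n) r"
  proof clarify
    fix g1 g2 assume g1: "g1 \<in> W P Q n" "P r (g1 []) = 1" and g2: "g2 \<in> W P Q n" "Q r (g2 []) = 1"
    have e: "build r g1 g2 \<in> extensional (Delta (Suc n))"
      unfolding extensional_def
    proof clarify
      fix x assume "x \<notin> Delta (Suc n)"
      then obtain d y where x: "x = d#y" and "y \<notin> Delta n" by (cases x) (auto simp: Delta_def)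
      then show "build r g1 g2 x = undefined" using g1 g2
        by (cases d) (auto simp: W_def extensional_def)
    qed
    have v: "\<forall>x\<in>Delta (Suc n). build r g1 g2 x \<le> 1"
    proof
      fix x assume "x \<in> Delta (Suc n)"
      then show "build r g1 g2 x \<le> 1" using g1 g2 assms
        by (cases x rule: dl_cases) (auto simp: W_def Delta_def)
    qed
    have c: "\<forall>x. length x < Suc n \<longrightarrow> P (build r g1 g2 x) (build r g1 g2 (x@[A1])) = 1 \<and>
         Q (build r g1 g2 x) (build r g1 g2 (x@[A2])) = 1"
    proof (intro allI impI)
      fix x :: "dir list" assume "length x < Suc n"
      then show "P (build r g1 g2 x) (build r g1 g2 (x@[A1])) = 1 \<and>
         Q (build r g1 g2 x) (build r g1 g2 (x@[A2])) = 1" using g1 g2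
        by (cases x rule: dl_cases) (auto simp: W_def)
    qed
    show "build r g1 g2 \<in> V P Q (Suc n) r" using e v c by (simp add: V_def W_def)
  qed
next
  show "V P Q (Suc n) r \<subseteq> (\<lambda>(g1,g2). build r g1 g2) `
     ({g\<in>W P Q n. P r (g []) = 1} \<times> {g\<in>W P Q n. Q r (g []) = 1})"
  proof
    fix F assume F: "F \<in> V P Q (Suc n) r"
    have Fe: "\<And>x. length x > Suc n \<Longrightarrow> F x = undefined" and Fv: "\<And>x. length x \<le> Suc n \<Longrightarrow> F x \<le> 1"
      and Fc: "\<And>x. length x < Suc n \<Longrightarrow> P (F x) (F (x@[A1])) = 1 \<and> Q (F x) (F (x@[A2])) = 1"
      and Fr: "F [] = r"
      using F by (auto simp: V_def W_def extensional_def Delta_def)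
    define g1 where "g1 = (\<lambda>y. F (A1#y))"
    define g2 where "g2 = (\<lambda>y. F (A2#y))"
    have Fb: "F = build r g1 g2"
    proof
      fix x show "F x = build r g1 g2 x" 
        by (cases x rule: dl_cases) (auto simp: Fr g1_def g2_def)
    qed
    have "g1 \<in> W P Q n" "g2 \<in> W P Q n" unfolding W_def extensional_def g1_def g2_def Delta_def
      using Fe Fv Fc[of "A1 # _"] Fc[of "A2 # _"] by auto
    moreover have "P r (g1 []) = 1" "Q r (g2 []) = 1" 
      using Fc[of "[]"] unfolding g1_def g2_def Fr by auto
    ultimately show "F \<in> (\<lambda>(g1,g2). build r g1 g2) `
     ({g\<in>W P Q n. P r (g []) = 1} \<times> {g\<in>W P Q n. Q r (g []) = 1})"
      using Fb by blast
  qed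
qed

lemma card_V_Suc:
  assumes "r \<le> 1"
  shows "card (V P Q (Suc n) r) = card {g\<in>W P Q n. P r (g []) = 1} * card {g\<in>W P Q n. Q r (g []) = 1}"
proof -
  have "inj_on (\<lambda>(g1,g2). build r g1 g2) X" for X
  proof (rule inj_onI, clarify)
    fix a b c d assume h: "build r a b = build r c d"
    have "a = c" proof fix y show "a y = c y" using fun_cong[OF h, of "A1#y"] by simp qed
    moreover have "b = d" proof fix y show "b y = d y" using fun_cong[OF h, of "A2#y"] by simp qed
    ultimately show "a = c \<and> b = d" by simp
  qed
  then show ?thesis using V_Suc[OF assms] by (simp add: card_image card_cartesian_product)
qed


definition extn :: "(nat\<Rightarrow>nat) \<Rightarrow> (nat\<Rightarrow>nat) \<Rightarrow> nat \<Rightarrow> dir list \<Rightarrow> nat" where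
  "extn sP sQ v y = foldl (\<lambda>v d. case d of A1 \<Rightarrow> sP v | A2 \<Rightarrow> sQ v) v y"

lemma extn_snoc: "extn sP sQ v (y@[d]) = (case d of A1 \<Rightarrow> sP (extn sP sQ v y) | A2 \<Rightarrow> sQ (extn sP sQ v y))"
  unfolding extn_def by simp

lemma extn_le:
  assumes "\<And>v. v \<le> 1 \<Longrightarrow> sP v \<le> 1" "\<And>v. v \<le> 1 \<Longrightarrow> sQ v \<le> 1" "v \<le> 1"
  shows "extn sP sQ v y \<le> 1"
  using assms(3)
proof (induction y rule: rev_induct)
  case Nil then show ?case by (simp add: extn_def)
next
  case (snoc d y) then show ?case using assms(1,2) by (cases d) (auto simp: extn_snoc)
qed

lemma image_restrict:
  assumes hP: "\<And>v. v \<le> 1 \<Longrightarrow> sP v \<le> 1 \<and> P v (sP v) = 1"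
      and hQ: "\<And>v. v \<le> 1 \<Longrightarrow> sQ v \<le> 1 \<and> Q v (sQ v) = 1"
  shows "(\<lambda>t. restrict t (Delta n)) ` tree_shift P Q = W P Q n"
proof
  show "(\<lambda>t. restrict t (Delta n)) ` tree_shift P Q \<subseteq> W P Q n"
  proof clarify
    fix t assume "t \<in> tree_shift P Q"
    then have tv: "\<And>x. t x \<le> 1" and tc: "\<And>x. P (t x) (t (x@[A1])) = 1 \<and> Q (t x) (t (x@[A2])) = 1"
      by (auto simp: tree_shift_def le_Suc_eq)
    show "restrict t (Delta n) \<in> W P Q n"
      unfolding W_def using tv tc by (auto simp: Delta_def)
  qed
next
  show "W P Q n \<subseteq> (\<lambda>t. restrict t (Delta n)) ` tree_shift P Q"
  proof
    fix f assume f: "f \<in> W P Q n"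
    have fe: "\<And>x. length x > n \<Longrightarrow> f x = undefined" and fv: "\<And>x. length x \<le> n \<Longrightarrow> f x \<le> 1"
      and fc: "\<And>x. length x < n \<Longrightarrow> P (f x) (f (x@[A1])) = 1 \<and> Q (f x) (f (x@[A2])) = 1"
      using f by (auto simp: W_def extensional_def Delta_def)
    define t where "t x = (if length x \<le> n then f x else extn sP sQ (f (take n x)) (drop n x))" for x
    have tv: "t x \<le> 1" for x
      unfolding t_def using fv extn_le[of sP sQ] hP hQ by auto
    have tc: "P (t x) (t (x@[d])) = 1 \<and> Q (t x) (t (x@[d'])) = 1" if "d = A1" "d' = A2" for x d d'
    proof (cases "length x < n")
      case True then show ?thesis using fc[OF True] that by (simp add: t_def)
    next
      case False
      have tk: "take n (x @ [e]) = take n x" for e using False by simp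
      have dr: "drop n (x @ [e]) = drop n x @ [e]" for e using False by simp
      have ge: "\<not> length (x@[e]) \<le> n" for e using False by simp
      have txd: "t (x@[e]) = (case e of A1 \<Rightarrow> sP (extn sP sQ (f (take n x)) (drop n x)) | A2 \<Rightarrow> sQ (extn sP sQ (f (take n x)) (drop n x)))" for e
        unfolding t_def using ge tk dr by (simp add: extn_snoc)
      have tx: "t x = extn sP sQ (f (take n x)) (drop n x)"
        using False by (cases "length x = n") (auto simp: t_def extn_def)
      have "t x \<le> 1" by (rule tv)
      then show ?thesis using hP hQ that by (simp add: txd tx[symmetric])
    qed
    have "t \<in> tree_shift P Q" unfolding tree_shift_def using tv tc
      by (auto simp: le_Suc_eq)
    moreover have "restrict t (Delta n) = f"
    proof
      fix x show "restrict t (Delta n) x = f x" using fe by (auto simp: t_def Delta_def)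
    qed
    ultimately show "f \<in> (\<lambda>t. restrict t (Delta n)) ` tree_shift P Q" by blast
  qed
qed

lemma finite_Delta: "finite (Delta n)"
proof -
  have "finite (UNIV :: dir set)"
  proof -
    have "(UNIV :: dir set) = {A1, A2}" using dir.exhaust by auto
    then show ?thesis by (metis finite.emptyI finite.insertI)
  qed
  then have "finite {xs :: dir list. set xs \<subseteq> UNIV \<and> length xs \<le> n}" by (rule finite_lists_length_le)
  then show ?thesis by (simp add: Delta_def)
qed

lemma finite_W: "finite (W P Q n)"
proof (rule finite_subset)
  show "W P Q n \<subseteq> PiE (Delta n) (\<lambda>_. {0..1})" by (auto simp: W_def PiE_def Pi_def)
  show "finite (PiE (Delta n) (\<lambda>_. {0..1::nat}))" by (rule finite_PiE[OF finite_Delta]) auto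
qed

lemma card_W: "card (W P Q n) = card (V P Q n 0) + card (V P Q n 1)"
proof -
  have "W P Q n = V P Q n 0 \<union> V P Q n 1"
    by (auto simp: V_def W_def Delta_def) (metis le_Suc_eq le_zero_eq list.size(3) zero_le)
  moreover have "V P Q n 0 \<inter> V P Q n 1 = {}" by (auto simp: V_def)
  moreover have "finite (V P Q n r)" for r using finite_W by (rule finite_subset[rotated]) (auto simp: V_def)
  ultimately show ?thesis by (simp add: card_Un_disjoint)
qed

lemma card_V0: assumes "r \<le> 1" shows "card (V P Q 0 r) = 1"
proof -
  have "V P Q 0 r = {restrict (\<lambda>_. r) (Delta 0)}"
  proof safe
    fix f assume f: "f \<in> V P Q 0 r"
    show "f = restrict (\<lambda>_. r) (Delta 0)"
    proof
      fix x show "f x = restrict (\<lambda>_. r) (Delta 0) x" using f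
        by (cases x) (auto simp: V_def W_def Delta_def extensional_def)
    qed
  qed (use assms in \<open>auto simp: V_def W_def Delta_def\<close>)
  then show ?thesis by simp
qed


lemma W_root: "g \<in> W P Q n \<Longrightarrow> g [] \<le> 1" by (auto simp: W_def Delta_def)

lemma setC: "r \<le> 1 \<Longrightarrow> {g\<in>W matC Q n. matC r (g []) = 1} = V matC Q n (1 - r)"
  by (auto simp: V_def matC_def dest: W_root)
lemma setD0: "{g\<in>W P matD n. matD 0 (g []) = 1} = W P matD n"
  by (auto simp: matD_def dest: W_root)
lemma setD1: "{g\<in>W P matD n. matD 1 (g []) = 1} = V P matD n 0"
  by (auto simp: V_def matD_def dest: W_root)
lemma setF0: "{g\<in>W P matF n. matF 0 (g []) = 1} = V P matF n 1"
  by (auto simp: V_def matF_def dest: W_root)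
lemma setF1: "{g\<in>W P matF n. matF 1 (g []) = 1} = W P matF n"
  by (auto simp: matF_def dest: W_root)

fun ab :: "nat \<Rightarrow> nat \<times> nat" where
  "ab 0 = (1,1)"
| "ab (Suc n) = (snd (ab n) * (fst (ab n) + snd (ab n)), fst (ab n) * fst (ab n))"

lemma cards: "card (V matC matD n 0) = fst (ab n) \<and> card (V matC matD n 1) = snd (ab n) \<and>
   card (V matC matF n 0) = snd (ab n) \<and> card (V matC matF n 1) = fst (ab n)"
proof (induction n)
  case 0 then show ?case by (simp add: card_V0)
next
  case (Suc n)
  have c0: "{g\<in>W matC Q n. matC 0 (g []) = 1} = V matC Q n 1" for Q using setC[of 0] by simp
  have c1: "{g\<in>W matC Q n. matC 1 (g []) = 1} = V matC Q n 0" for Q using setC[of 1] by simp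
  have "card (V matC matD (Suc n) 0) = card (V matC matD n 1) * card (W matC matD n)"
    using card_V_Suc[of 0 matC matD n] c0 setD0 by simp
  moreover have "card (V matC matD (Suc n) 1) = card (V matC matD n 0) * card (V matC matD n 0)"
    using card_V_Suc[of 1 matC matD n] c1 setD1 by simp
  moreover have "card (V matC matF (Suc n) 0) = card (V matC matF n 1) * card (V matC matF n 1)"
    using card_V_Suc[of 0 matC matF n] c0 setF0 by simp
  moreover have "card (V matC matF (Suc n) 1) = card (V matC matF n 0) * card (W matC matF n)"
    using card_V_Suc[of 1 matC matF n] c1 setF1 by simp
  ultimately show ?case using Suc.IH by (simp add: card_W)
qed

lemma pcount_CD: "pcount matC matD n = fst (ab n) + snd (ab n)"
proof -
  have "pcount matC matD n = card (W matC matD n)"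
    unfolding pcount_def
    by (subst image_restrict[where sP="\<lambda>v. 1 - v" and sQ="\<lambda>v. 0"])
       (auto simp: matC_def matD_def le_Suc_eq)
  then show ?thesis using cards by (simp add: card_W)
qed

lemma pcount_CF: "pcount matC matF n = fst (ab n) + snd (ab n)"
proof -
  have "pcount matC matF n = card (W matC matF n)"
    unfolding pcount_def
    by (subst image_restrict[where sP="\<lambda>v. 1 - v" and sQ="\<lambda>v. 1"])
       (auto simp: matC_def matF_def le_Suc_eq)
  then show ?thesis using cards by (simp add: card_W)
qed



definition pp :: "nat \<Rightarrow> nat" where "pp n = fst (ab n) + snd (ab n)"

lemma ab_pos: "fst (ab n) \<ge> 1 \<and> snd (ab n) \<ge> 1"
  by (induction n) (auto simp: Let_def)

lemma pp_pos: "pp n \<ge> 1" using ab_pos[of n] by (simp add: pp_def)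

lemma pp_sq: "pp (Suc n) \<le> pp n ^ 2"
proof -
  obtain a b where ab: "ab n = (a,b)" by (cases "ab n")
  have "b * (a + b) + a * a \<le> (a + b)^2" by (simp add: power2_eq_square algebra_simps)
  then show ?thesis by (simp add: pp_def ab)
qed

lemma pp2: "pp 2 = 7" by (simp add: pp_def numeral_2_eq_2)

lemma ab4: "ab 4 = (333, 784)" by (simp add: numeral_eq_Suc)

lemma big: "fst (ab (m+4)) \<ge> 2^(2^(m+3)) \<and> snd (ab (m+4)) \<ge> 2^(2^(m+3))"
proof (induction m)
  case 0 then show ?case by (simp add: ab4)
next
  case (Suc m)
  obtain a b where e: "ab (m+4) = (a,b)" by (cases "ab (m+4)")
  have ha: "a \<ge> 2^(2^(m+3))" and hb: "b \<ge> 2^(2^(m+3))" using Suc.IH e by auto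
  have sq: "(2::nat)^(2^(Suc m+3)) = 2^(2^(m+3)) * 2^(2^(m+3))"
  proof -
    have "(2::nat)^(Suc m+3) = 2^(m+3) + 2^(m+3)" by (simp add: mult_2[symmetric] power_add)
    then show ?thesis by (metis power_add)
  qed
  have "b * (a + b) \<ge> 2^(2^(Suc m+3))"
    unfolding sq using ha hb by (meson le_add1 mult_le_mono order_trans)
  moreover have "a * a \<ge> 2^(2^(Suc m+3))" unfolding sq using ha by (simp add: mult_le_mono)
  moreover have "ab (Suc m + 4) = (b * (a + b), a * a)"
  proof -
    have "Suc m + 4 = Suc (m + 4)" by simp
    then show ?thesis using e by (simp only: ab.simps fst_conv snd_conv)
  qed
  ultimately show ?case by simp
qed

lemma sum2: "(\<Sum>i\<le>n. (2::nat)^i) + 1 = 2^(Suc n)"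
  by (induction n) auto

definition v :: "nat \<Rightarrow> real" where "v n = ln (real (pp n)) / 2^(Suc n)"

lemma v_nonneg: "v n \<ge> 0" using pp_pos[of n] by (simp add: v_def)

lemma v_dec: "decseq v"
proof (rule decseq_SucI)
  fix n
  have "ln (real (pp (Suc n))) \<le> ln (real (pp n ^ 2))"
    using pp_sq[of n] pp_pos[of "Suc n"] pp_pos[of n] by (subst ln_le_cancel_iff) (auto simp del: of_nat_power)
  also have "\<dots> = 2 * ln (real (pp n))" using pp_pos[of n] by (simp add: ln_realpow)
  finally show "v (Suc n) \<le> v n" unfolding v_def by (simp add: field_simps)
qed

lemma hseq_eq: "hseq P Q n = ln (real (pcount P Q n)) / (2^(Suc n) - 1)"
proof -
  have "real (\<Sum>i\<le>n. (2::nat)^i) = 2^(Suc n) - 1"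
    using arg_cong[OF sum2[of n], of real] by simp
  then show ?thesis by (simp add: hseq_def)
qed

lemma hseq_v: "hseq matC matD n = v n / (1 - (1/2)^(Suc n))"
proof -
  have pos: "(2::real)^(Suc n) > 1" by (rule one_less_power) auto
  have "(1 - (1/2::real)^(Suc n)) = (2^(Suc n) - 1) / 2^(Suc n)" by (simp add: field_simps power_divide)
  then show ?thesis using pos unfolding hseq_eq v_def pcount_CD pp_def[symmetric] by (simp add: field_simps)
qed



lemma lower: "n \<ge> 4 \<Longrightarrow> ln 2 / 4 \<le> hseq matC matD n"
proof -
  assume "n \<ge> 4"
  then obtain m where n: "n = m + 4" by (metis add.commute le_Suc_ex)
  have "real (pp n) \<ge> 2^(2^(m+3))"
  proof -
    have "pp n \<ge> 2^(2^(m+3))" using big[of m] unfolding n pp_def by linarith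
    then show ?thesis by (metis of_nat_le_iff of_nat_numeral of_nat_power)
  qed
  then have "ln (real (pp n)) \<ge> ln (2^(2^(m+3)))" using pp_pos[of n] by (subst ln_le_cancel_iff) auto
  then have l: "ln (real (pp n)) \<ge> 2^(m+3) * ln 2" by (simp add: ln_realpow)
  have "(2::real)^(Suc n) > 1" by (rule one_less_power) auto
  then have d: "(2::real)^(Suc n) - 1 > 0" by simp
  have "ln 2 / 4 = (2::real)^(m+3) * ln 2 / 2^(Suc n)" unfolding n by (simp add: power_add)
  also have "\<dots> \<le> ln (real (pp n)) / 2^(Suc n)" using l by (simp add: divide_right_mono)
  also have "\<dots> \<le> ln (real (pp n)) / (2^(Suc n) - 1)"
    using d l by (intro divide_left_mono) (auto intro: order_trans[OF _ l])
  also have "\<dots> = hseq matC matD n" unfolding hseq_eq pcount_CD pp_def by simp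
  finally show ?thesis .
qed

theorem mainTheorem17:
  shows "convergent (hseq matC matD) \<and> convergent (hseq matC matF) \<and>
         lim (hseq matC matD) = lim (hseq matC matF) \<and>
         ln 2 / 4 \<le> lim (hseq matC matD) \<and> lim (hseq matC matD) \<le> ln 7 / 8"
proof -
  have eqF: "hseq matC matF = hseq matC matD" by (rule ext) (simp add: hseq_def pcount_CD pcount_CF)
  obtain L where vL: "v \<longlonglongrightarrow> L" and Lv: "\<forall>i. L \<le> v i"
    using decseq_convergent[OF v_dec, of 0] v_nonneg by blast
  have z: "(\<lambda>n. (1/2::real)^(Suc n)) \<longlonglongrightarrow> 0"
    by (rule LIMSEQ_Suc) (rule LIMSEQ_power_zero, simp)
  have "(\<lambda>n. v n / (1 - (1/2)^(Suc n))) \<longlonglongrightarrow> L / (1 - 0)"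
    by (intro tendsto_intros vL z) simp
  moreover have "hseq matC matD = (\<lambda>n. v n / (1 - (1/2)^(Suc n)))" by (rule ext) (rule hseq_v)
  ultimately have hL: "hseq matC matD \<longlonglongrightarrow> L" by simp
  then have lim: "lim (hseq matC matD) = L" by (rule limI)
  have up: "L \<le> ln 7 / 8" using Lv[rule_format, of 2] by (simp add: v_def pp2)
  have lo: "ln 2 / 4 \<le> L" by (rule LIMSEQ_le_const[OF hL]) (use lower in blast)
  show ?thesis using hL lim up lo eqF by (auto simp: convergent_def)
qed

end
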